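(* Let $\sim$ be a right congruence on $\Sigma^*$ of finite index and let $\approx$ be its suffix expansion. Then $|\Sigma^{\le n}/{\approx}|$ is polynomially bounded in $n$ if and only if $\sim$ has no critical tuple.
   Context: A right congruence on $\Sigma^*$ is an equivalence $\sim$ with $x\sim y\Rightarrow xz\sim yz$ for all $z$. Its suffix expansion $\approx$ is defined by $a_1\cdots a_n\approx b_1\cdots b_m$ iff $n=m$ and $a_i\cdots a_n\sim b_i\cdots b_n$ for all $1\le i\le n$. A critical tuple in $\sim$ is a tuple $(u_2,v_2,u,v)$ of words with $|u_2|=|v_2|\ge1$, $u=u_1u_2$ and $v=v_1v_2$ for some words $u_1,v_1$, and $u_2w\not\sim v_2w$ for all $w\in\{u,v\}^*$. *)

theory Defs
  imports Main
begin

definition right_congruence :: "'a set \<Rightarrow> ('a list \<times> 'a list) set \<Rightarrow> bool" where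
  "right_congruence Alph R \<longleftrightarrow> equiv (lists Alph) R \<and>
     (\<forall>x y z. (x, y) \<in> R \<longrightarrow> z \<in> lists Alph \<longrightarrow> (x @ z, y @ z) \<in> R)"

definition finite_index :: "'a set \<Rightarrow> ('a list \<times> 'a list) set \<Rightarrow> bool" where
  "finite_index Alph R \<longleftrightarrow> finite (lists Alph // R)"

text \<open>Suffix expansion: a_1..a_n ~~ b_1..b_m iff n = m and a_i..a_n ~ b_i..b_n for all 1 <= i <= n
  (the suffix starting at position i+1 is drop i).\<close>
definition suffix_expansion :: "'a set \<Rightarrow> ('a list \<times> 'a list) set \<Rightarrow> ('a list \<times> 'a list) set" where
  "suffix_expansion Alph R = {(u, v). u \<in> lists Alph \<and> v \<in> lists Alph \<and>
     length u = length v \<and> (\<forall>i < length u. (drop i u, drop i v) \<in> R)}"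

definition word_star :: "'a list set \<Rightarrow> 'a list set" where
  "word_star W = concat ` lists W"

definition critical_tuple :: "'a set \<Rightarrow> ('a list \<times> 'a list) set \<Rightarrow>
    'a list \<Rightarrow> 'a list \<Rightarrow> 'a list \<Rightarrow> 'a list \<Rightarrow> bool" where
  "critical_tuple Alph R u2 v2 u v \<longleftrightarrow>
     u2 \<in> lists Alph \<and> v2 \<in> lists Alph \<and> u \<in> lists Alph \<and> v \<in> lists Alph \<and>
     length u2 = length v2 \<and> length u2 \<ge> 1 \<and>
     (\<exists>u1. u = u1 @ u2) \<and> (\<exists>v1. v = v1 @ v2) \<and>
     (\<forall>w \<in> word_star {u, v}. (u2 @ w, v2 @ w) \<notin> R)"

definition has_critical_tuple :: "'a set \<Rightarrow> ('a list \<times> 'a list) set \<Rightarrow> bool" where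
  "has_critical_tuple Alph R \<longleftrightarrow> (\<exists>u2 v2 u v. critical_tuple Alph R u2 v2 u v)"

definition words_upto :: "'a set \<Rightarrow> nat \<Rightarrow> 'a list set" where
  "words_upto Alph n = {w \<in> lists Alph. length w \<le> n}"

definition poly_bounded :: "(nat \<Rightarrow> nat) \<Rightarrow> bool" where
  "poly_bounded f \<longleftrightarrow> (\<exists>c d::nat. \<forall>n. f n \<le> c * (n + 1) ^ d)"

end

theory Submission
  imports Defs
begin

lemma card_image_factor:
  assumes "finite A" and fx: "\<And>x y. x \<in> A \<Longrightarrow> y \<in> A \<Longrightarrow> h x = h y \<Longrightarrow> f x = f y"
  shows "card (f ` A) \<le> card (h ` A)"
proof -
  define g where "g z = f (SOME x. x \<in> A \<and> h x = z)" for z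
  have g: "g (h x) = f x" if x: "x \<in> A" for x
  proof -
    have "\<exists>x'. x' \<in> A \<and> h x' = h x" using x by blast
    hence "(SOME x'. x' \<in> A \<and> h x' = h x) \<in> A \<and> h (SOME x'. x' \<in> A \<and> h x' = h x) = h x"
      by (rule someI_ex)
    hence "f (SOME x'. x' \<in> A \<and> h x' = h x) = f x" using fx x by metis
    thus ?thesis unfolding g_def .
  qed
  have "f ` A = g ` (h ` A)" unfolding image_image by (rule image_cong) (simp_all add: g)
  also have "card \<dots> \<le> card (h ` A)" using assms(1) by (intro card_image_le) simp
  finally show ?thesis by simp
qed

lemma arith1:
  fixes P cS cA n :: nat
  assumes "1 \<le> P"
  shows "cS + n*(cA*(cS*P)) \<le> (cS*(cA+1))*(n+1)*P"
proof -
  have "cS \<le> cS*((n+1)*P)" using assms by simp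
  moreover have "n*(cA*(cS*P)) \<le> (n+1)*(cA*(cS*P))" by simp
  ultimately have "cS + n*(cA*(cS*P)) \<le> cS*((n+1)*P) + (n+1)*(cA*(cS*P))" by linarith
  also have "\<dots> = (cS*(cA+1))*(n+1)*P" by (simp add: algebra_simps)
  finally show ?thesis .
qed
lemma growth: "\<exists>k::nat. a * (k+1)^d < (2::nat)^k"
proof -
  define t :: nat where "t = 2*d + a + 1"
  define j where "j = 2*t"
  define k :: nat where "k = 2^j - 1"
  have kj: "k + 1 = 2^j" unfolding k_def by simp
  have "t < 2^t" by (rule less_exp)
  hence "t*t < 2^t*2^t" by (intro mult_strict_mono) auto
  hence t1: "t*t < 2^j" unfolding j_def by (simp add: power_add[symmetric] mult_2)
  have "t*t = t*(2*d) + t*(a+1)" unfolding t_def by (simp add: algebra_simps)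
  moreover have "t*(a+1) \<ge> a+1" unfolding t_def by simp
  ultimately have t2: "j*d + a + 1 \<le> t*t" unfolding j_def by (simp add: algebra_simps)
  have le: "a + j*d \<le> k" using t1 t2 kj by linarith
  have "a*(k+1)^d = a*2^(j*d)" unfolding kj by (simp add: power_mult)
  also have "\<dots> < 2^a * 2^(j*d)" using less_exp[of a] by simp
  also have "\<dots> = 2^(a + j*d)" by (simp add: power_add)
  also have "\<dots> \<le> 2^k" using le by (intro power_increasing) auto
  finally show ?thesis by blast
qed

lemma list_last_diff:
  "length xs = length ys \<Longrightarrow> xs \<noteq> ys \<Longrightarrow>
    \<exists>p p' x y q. xs = p@x#q \<and> ys = p'@y#q \<and> x \<noteq> y \<and> length p = length p'"
proof (induction xs arbitrary: ys)
  case Nil thus ?case by simp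
next
  case (Cons a xs)
  then obtain b ys' where ys: "ys = b # ys'" by (cases ys) auto
  show ?case
  proof (cases "xs = ys'")
    case True
    hence "a \<noteq> b" using Cons.prems ys by simp
    thus ?thesis using True ys by (intro exI[of _ "[]"]) auto
  next
    case False
    then obtain p p' x y q where "xs = p@x#q" "ys' = p'@y#q" "x \<noteq> y" "length p = length p'"
      using Cons.IH[of ys'] Cons.prems ys by auto
    thus ?thesis using ys by (intro exI[of _ "a#p"] exI[of _ "b#p'"]) auto
  qed
qed

locale rcx =
  fixes Alph :: "'a set" and R :: "('a list \<times> 'a list) set"
  assumes finA: "finite Alph" and rc: "right_congruence Alph R" and fi: "finite_index Alph R"
begin

lemma eqv: "equiv (lists Alph) R"
  using rc unfolding right_congruence_def by blast

lemma cong: "(x,y)\<in>R \<Longrightarrow> z \<in> lists Alph \<Longrightarrow> (x@z, y@z) \<in> R"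
  using rc unfolding right_congruence_def by blast

lemma R_lists: "(x,y) \<in> R \<Longrightarrow> x \<in> lists Alph \<and> y \<in> lists Alph"
  using eqv unfolding equiv_def refl_on_def by blast

lemma Rrefl: "x \<in> lists Alph \<Longrightarrow> (x,x) \<in> R"
  using eqv unfolding equiv_def refl_on_def by blast

lemma Rsym: "(x,y) \<in> R \<Longrightarrow> (y,x) \<in> R"
  using eqv unfolding equiv_def sym_def by blast

lemma Rtrans: "(x,y) \<in> R \<Longrightarrow> (y,z) \<in> R \<Longrightarrow> (x,z) \<in> R"
  using eqv unfolding equiv_def trans_def by blast

definition Rep where "Rep = (\<lambda>C. SOME x. x \<in> C) ` (lists Alph // R)"

lemma Rep_fin: "finite Rep"
  using fi unfolding Rep_def finite_index_def by simp

lemma Rep_ex: "x \<in> lists Alph \<Longrightarrow> \<exists>r\<in>Rep. (x,r) \<in> R"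
proof -
  assume x: "x \<in> lists Alph"
  have C: "R``{x} \<in> lists Alph // R" using x by (rule quotientI)
  have xin: "x \<in> R``{x}" using Rrefl[OF x] by blast
  hence "(SOME y. y \<in> R``{x}) \<in> R``{x}" by (rule someI)
  thus ?thesis using C unfolding Rep_def by blast
qed

lemma Rep_sub: "r \<in> Rep \<Longrightarrow> r \<in> lists Alph"
proof -
  assume "r \<in> Rep"
  then obtain C where C: "C \<in> lists Alph // R" and r: "r = (SOME x. x \<in> C)" unfolding Rep_def by blast
  from C obtain x where x: "x \<in> lists Alph" "C = R``{x}" by (rule quotientE)
  have "x \<in> C" using x Rrefl by blast
  hence "r \<in> C" unfolding r by (rule someI)
  thus ?thesis using x R_lists by blast
qed

definition phi where "phi s = (\<lambda>r. if r \<in> Rep then R``{r@s} else {})"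
definition SS where "SS = {f. \<forall>r. (r\<in>Rep \<longrightarrow> f r \<in> lists Alph // R) \<and> (r \<notin> Rep \<longrightarrow> f r = {})}"

lemma SS_fin: "finite SS"
  unfolding SS_def using finite_set_of_finite_funs[OF Rep_fin fi[unfolded finite_index_def]] by blast

lemma phi_SS: "s \<in> lists Alph \<Longrightarrow> phi s \<in> SS"
proof -
  assume s: "s \<in> lists Alph"
  have "r \<in> Rep \<Longrightarrow> R``{r@s} \<in> lists Alph // R" for r
    using Rep_sub[of r] s by (intro quotientI) simp
  thus ?thesis unfolding SS_def phi_def by auto
qed

lemma phi_E:
  assumes s: "s \<in> lists Alph" and s': "s' \<in> lists Alph" and e: "phi s = phi s'" and x: "x \<in> lists Alph"
  shows "(x@s, x@s') \<in> R"
proof -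
  obtain r where r: "r \<in> Rep" "(x,r) \<in> R" using Rep_ex[OF x] by blast
  have rl: "r \<in> lists Alph" using Rep_sub r by blast
  have "R``{r@s} = R``{r@s'}" using fun_cong[OF e, of r] r unfolding phi_def by simp
  moreover have "r@s' \<in> R``{r@s'}" using Rrefl[of "r@s'"] rl s' by simp
  ultimately have 1: "(r@s, r@s') \<in> R" by blast
  have 2: "(x@s, r@s) \<in> R" using cong[OF r(2) s] .
  have 3: "(r@s', x@s') \<in> R" using cong[OF Rsym[OF r(2)] s'] .
  show ?thesis using Rtrans[OF Rtrans[OF 2 1] 3] .
qed

lemma phi_app:
  assumes s: "s \<in> lists Alph" and s': "s' \<in> lists Alph" and e: "phi s = phi s'" and p: "p \<in> lists Alph"
  shows "phi (p@s) = phi (p@s')"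
proof
  fix r show "phi (p@s) r = phi (p@s') r"
  proof (cases "r \<in> Rep")
    case True
    have "(r@p@s, r@p@s') \<in> R" using phi_E[OF s s' e, of "r@p"] p Rep_sub[OF True] by simp
    hence "R``{r@p@s} = R``{r@p@s'}" using eqv by (simp add: equiv_class_eq)
    thus ?thesis using True unfolding phi_def by simp
  qed (simp add: phi_def)
qed

definition reach where "reach s = {phi (t@s) | t. t \<in> lists Alph}"

lemma reach_SS: "s \<in> lists Alph \<Longrightarrow> reach s \<subseteq> SS"
proof
  fix f assume s: "s \<in> lists Alph" and "f \<in> reach s"
  then obtain t where "t \<in> lists Alph" "f = phi (t@s)" unfolding reach_def by blast
  thus "f \<in> SS" using phi_SS[of "t@s"] s by simp
qed

lemma reach_fin: "s \<in> lists Alph \<Longrightarrow> finite (reach s)"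
  using reach_SS SS_fin finite_subset by blast

lemma reach_self: "phi s \<in> reach s"
  unfolding reach_def by (auto intro!: exI[of _ "[]"])

lemma reach_mono: "t \<in> lists Alph \<Longrightarrow> reach (t@s) \<subseteq> reach s"
proof
  fix f assume t: "t \<in> lists Alph" and "f \<in> reach (t@s)"
  then obtain p where "p \<in> lists Alph" "f = phi (p@t@s)" unfolding reach_def by blast
  thus "f \<in> reach s" unfolding reach_def using t by (auto intro!: exI[of _ "p@t"])
qed

lemma reach_phi:
  assumes s: "s \<in> lists Alph" and s': "s' \<in> lists Alph" and e: "phi s = phi s'"
  shows "reach s = reach s'"
  unfolding reach_def using phi_app[OF s s' e] phi_app[OF s' s e[symmetric]] by metis

fun out where "out s [] = []" | "out s (a#t) = R``{a#t@s} # out s t"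

lemma out_len[simp]: "length (out s t) = length t"
  by (induction t) auto

lemma out_app: "out s (t1@t2) = out (t2@s) t1 @ out s t2"
  by (induction t1) auto

lemma out_nth: "j < length t \<Longrightarrow> out s t ! j = R``{drop j t @ s}"
proof (induction t arbitrary: j)
  case (Cons a t) thus ?case by (cases j) auto
qed simp

lemma out_phi:
  assumes s: "s \<in> lists Alph" and s': "s' \<in> lists Alph" and e: "phi s = phi s'"
  shows "t \<in> lists Alph \<Longrightarrow> out s t = out s' t"
proof (induction t)
  case (Cons a t)
  have "(((a#t)@s), ((a#t)@s')) \<in> R" using phi_E[OF s s' e Cons.prems] .
  hence "R``{a#t@s} = R``{a#t@s'}" using eqv by (simp add: equiv_class_eq)
  thus ?case using Cons by simp
qed simp

lemma star_phi:
  assumes s: "s \<in> lists Alph" and u: "u \<in> lists Alph" and v: "v \<in> lists Alph"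
    and pu: "phi (u@s) = phi s" and pv: "phi (v@s) = phi s"
  shows "zs \<in> lists {u,v} \<Longrightarrow> phi (concat zs @ s) = phi s \<and> concat zs \<in> lists Alph"
proof (induction zs)
  case (Cons b zs)
  have b: "b \<in> lists Alph" "phi (b@s) = phi s" using Cons.prems u v pu pv by auto
  have IH: "phi (concat zs @ s) = phi s" "concat zs \<in> lists Alph" using Cons by auto
  have "phi (b @ concat zs @ s) = phi (b @ s)"
    using phi_app[OF _ s IH(1) b(1)] IH(2) s by simp
  thus ?case using b IH by simp
qed simp

lemma loop_out:
  assumes nc: "\<not> has_critical_tuple Alph R"
    and s: "s \<in> lists Alph" and u: "u \<in> lists Alph" and v: "v \<in> lists Alph"
    and len: "length u = length v"
    and pu: "phi (u@s) = phi s" and pv: "phi (v@s) = phi s"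
  shows "out s u = out s v"
proof (rule ccontr)
  assume "out s u \<noteq> out s v"
  then obtain j where j: "j < length u" "out s u ! j \<noteq> out s v ! j"
    using len nth_equalityI[of "out s u" "out s v"] by auto
  define x where "x = drop j u"
  define y where "y = drop j v"
  have xl: "x \<in> lists Alph" "y \<in> lists Alph" using u v set_drop_subset unfolding x_def y_def
    by (metis in_lists_conv_set subsetD)+
  have ne: "R``{x@s} \<noteq> R``{y@s}" using j len out_nth[of j u s] out_nth[of j v s]
    unfolding x_def y_def by simp
  have nR: "(x@s, y@s) \<notin> R"
  proof
    assume "(x@s, y@s) \<in> R"
    hence "R``{x@s} = R``{y@s}" using eqv by (simp add: equiv_class_eq)
    thus False using ne by simp
  qed
  have "critical_tuple Alph R x y u v"
    unfolding critical_tuple_def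
  proof (intro conjI ballI)
    show "x \<in> lists Alph" "y \<in> lists Alph" "u \<in> lists Alph" "v \<in> lists Alph" using xl u v by auto
    show "length x = length y" "1 \<le> length x" using j len unfolding x_def y_def by auto
    show "\<exists>u1. u = u1 @ x" unfolding x_def by (metis append_take_drop_id)
    show "\<exists>v1. v = v1 @ y" unfolding y_def by (metis append_take_drop_id)
    fix w assume "w \<in> word_star {u, v}"
    then obtain zs where zs: "zs \<in> lists {u,v}" "w = concat zs" unfolding word_star_def by blast
    have pw: "phi (w@s) = phi s" "w \<in> lists Alph" using star_phi[OF s u v pu pv zs(1)] zs(2) by auto
    show "(x @ w, y @ w) \<notin> R"
    proof
      assume "(x @ w, y @ w) \<in> R"
      hence 1: "(x@w@s, y@w@s) \<in> R" using cong[OF _ s] by fastforce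
      have 2: "(x@w@s, x@s) \<in> R" using phi_E[OF _ s pw(1) xl(1)] pw(2) s by simp
      have 3: "(y@w@s, y@s) \<in> R" using phi_E[OF _ s pw(1) xl(2)] pw(2) s by simp
      have "(x@s, y@s) \<in> R" using Rtrans[OF Rtrans[OF Rsym[OF 2] 1] 3] .
      thus False using nR by simp
    qed
  qed
  thus False using nc unfolding has_critical_tuple_def by blast
qed

lemma scc_out:
  assumes nc: "\<not> has_critical_tuple Alph R"
    and s: "s \<in> lists Alph" and t: "t \<in> lists Alph" and tt: "t' \<in> lists Alph"
    and len: "length t = length t'"
    and e: "phi (t@s) = phi (t'@s)" and bk: "phi s \<in> reach (t@s)"
  shows "out s t = out s t'"
proof -
  obtain p where p: "p \<in> lists Alph" "phi s = phi (p@t@s)" using bk unfolding reach_def by blast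
  have p2: "phi (p@t'@s) = phi (p@t@s)" using phi_app[OF _ _ e[symmetric] p(1)] t tt s by simp
  have "out s (p@t) = out s (p@t')"
    using loop_out[OF nc s, of "p@t" "p@t'"] p p2 t tt len by simp
  hence "out (t@s) p @ out s t = out (t'@s) p @ out s t'" by (simp add: out_app)
  thus ?thesis using len by simp
qed

lemma decomp:
  assumes s: "s \<in> lists Alph"
  shows "t \<in> lists Alph \<Longrightarrow> phi s \<notin> reach (t@s) \<Longrightarrow>
    \<exists>t1 a t2. t = t1 @ a # t2 \<and> phi s \<in> reach (t2@s) \<and> phi s \<notin> reach (a#t2@s)"
proof (induction t)
  case Nil thus ?case using reach_self[of s] by simp
next
  case (Cons b t)
  show ?case
  proof (cases "phi s \<in> reach (t@s)")
    case True thus ?thesis using Cons.prems by (intro exI[of _ "[]"]) auto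
  next
    case False
    then obtain t1 a t2 where "t = t1 @ a # t2" "phi s \<in> reach (t2@s)" "phi s \<notin> reach (a#t2@s)"
      using Cons by auto
    thus ?thesis by (intro exI[of _ "b#t1"]) auto
  qed
qed

lemma out_set: "s \<in> lists Alph \<Longrightarrow> t \<in> lists Alph \<Longrightarrow> set (out s t) \<subseteq> lists Alph // R"
proof (induction t)
  case (Cons a t)
  have "R``{a#t@s} \<in> lists Alph // R" using Cons.prems by (intro quotientI) simp
  thus ?case using Cons by simp
qed simp

lemma fiq: "finite (lists Alph // R)" using fi unfolding finite_index_def .

lemma SS_ne: "1 \<le> card SS"
proof -
  have "phi [] \<in> SS" using phi_SS by simp
  hence "card SS \<noteq> 0" using SS_fin by auto
  thus ?thesis by simp
qed

definition Tn where "Tn n = {t. set t \<subseteq> Alph \<and> length t = n}"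

lemma Tn_fin: "finite (Tn n)" unfolding Tn_def using finA by (rule finite_lists_length_eq)

lemma Tn_iff: "t \<in> Tn n \<longleftrightarrow> t \<in> lists Alph \<and> length t = n" unfolding Tn_def by auto

lemma bound:
  assumes nc: "\<not> has_critical_tuple Alph R"
  shows "s \<in> lists Alph \<Longrightarrow> card (out s ` Tn n) \<le>
     (card SS * (card Alph + 1))^(card (reach s)) * (n+1)^(card (reach s))"
proof (induction "card (reach s)" arbitrary: s n rule: less_induct)
  case less
  define B where "B = card SS * (card Alph + 1)"
  define r where "r = card (reach s)"
  define P where "P = B^(r-1) * (n+1)^(r-1)"
  have s: "s \<in> lists Alph" by fact
  have r1: "r \<ge> 1"
  proof -
    have "card (reach s) \<noteq> 0" using reach_fin[OF s] reach_self[of s] by auto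
    thus ?thesis unfolding r_def by simp
  qed
  have B1: "B \<ge> 1" unfolding B_def using SS_ne by simp
  have P1: "P \<ge> 1" unfolding P_def using B1 by simp
  define T1 where "T1 = {t \<in> Tn n. phi s \<in> reach (t@s)}"
  define T2 where "T2 = {t \<in> Tn n. phi s \<notin> reach (t@s)}"
  have fT1: "finite T1" "finite T2" unfolding T1_def T2_def using Tn_fin by auto
  have split: "out s ` Tn n = out s ` T1 \<union> out s ` T2" unfolding T1_def T2_def by auto
  have c1: "card (out s ` T1) \<le> card SS"
  proof -
    have "card (out s ` T1) \<le> card ((\<lambda>t. phi (t@s)) ` T1)"
    proof (rule card_image_factor[OF fT1(1)])
      fix x y assume "x \<in> T1" "y \<in> T1" "phi (x@s) = phi (y@s)"
      thus "out s x = out s y" using scc_out[OF nc s, of x y] unfolding T1_def Tn_iff by auto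
    qed
    also have "\<dots> \<le> card SS"
      by (rule card_mono[OF SS_fin]) (use s in \<open>auto simp: T1_def Tn_iff intro!: phi_SS\<close>)
    finally show ?thesis .
  qed
  define dec where "dec t = (SOME (t1,a,t2). t = t1 @ a # t2 \<and> phi s \<in> reach (t2@s) \<and> phi s \<notin> reach (a#t2@s))" for t
  have dec: "case dec t of (t1,a,t2) \<Rightarrow> t = t1 @ a # t2 \<and> phi s \<in> reach (t2@s) \<and> phi s \<notin> reach (a#t2@s)"
    if t: "t \<in> T2" for t
  proof -
    have "\<exists>t1 a t2. t = t1 @ a # t2 \<and> phi s \<in> reach (t2@s) \<and> phi s \<notin> reach (a#t2@s)"
      using decomp[OF s] t unfolding T2_def Tn_iff by auto
    hence "\<exists>p. case p of (t1,a,t2) \<Rightarrow> t = t1 @ a # t2 \<and> phi s \<in> reach (t2@s) \<and> phi s \<notin> reach (a#t2@s)"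
      by auto
    thus ?thesis unfolding dec_def by (rule someI_ex)
  qed
  define code where "code t = (case dec t of (t1,a,t2) \<Rightarrow> (length t1, a, phi (t2@s), out (a#t2@s) t1))" for t
  have c2a: "card (out s ` T2) \<le> card (code ` T2)"
  proof (rule card_image_factor[OF fT1(2)])
    fix t t' assume t: "t \<in> T2" and t': "t' \<in> T2" and ce: "code t = code t'"
    obtain t1 a t2 where d: "dec t = (t1,a,t2)" by (cases "dec t") auto
    obtain t1' a' t2' where d': "dec t' = (t1',a',t2')" by (cases "dec t'") auto
    have D: "t = t1 @ a # t2" "phi s \<in> reach (t2@s)" using dec[OF t] d by auto
    have D': "t' = t1' @ a' # t2'" using dec[OF t'] d' by auto
    have ce': "length t1 = length t1'" "a = a'" "phi (t2@s) = phi (t2'@s)"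
      "out (a#t2@s) t1 = out (a'#t2'@s) t1'" using ce d d' unfolding code_def by auto
    have L: "t \<in> lists Alph" "t' \<in> lists Alph" "length t = n" "length t' = n"
      using t t' unfolding T2_def Tn_iff by auto
    have l2: "t2 \<in> lists Alph" "t2' \<in> lists Alph" "a \<in> Alph" using L D D' ce' by auto
    have len2: "length t2 = length t2'" using L D D' ce' by simp
    have o2: "out s t2 = out s t2'" using scc_out[OF nc s l2(1) l2(2) len2 ce'(3) D(2)] .
    have "([a]@t2@s, [a]@t2'@s) \<in> R" using phi_E[OF _ _ ce'(3), of "[a]"] l2 s by simp
    hence o3: "R``{a#t2@s} = R``{a#t2'@s}" using eqv by (simp add: equiv_class_eq)
    have "out s t = out (a#t2@s) t1 @ R``{a#t2@s} # out s t2" unfolding D(1) by (simp add: out_app)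
    moreover have "out s t' = out (a'#t2'@s) t1' @ R``{a'#t2'@s} # out s t2'" unfolding D'(1) by (simp add: out_app)
    ultimately show "out s t = out s t'" using o2 o3 ce' by simp
  qed
  define X where "X k a q = {ob. \<exists>t2 t1. a \<in> Alph \<and> t2 \<in> lists Alph \<and> phi (t2@s) = q \<and> phi s \<notin> reach (a#t2@s) \<and> t1 \<in> Tn k \<and> ob = out (a#t2@s) t1}" for k a q
  define Big where "Big = (\<Union>k\<in>{..<n}. \<Union>a\<in>Alph. \<Union>q\<in>SS. (\<lambda>ob. (k,a,q,ob)) ` X k a q)"
  have sub: "code ` T2 \<subseteq> Big"
  proof
    fix c assume "c \<in> code ` T2"
    then obtain t where t: "t \<in> T2" "c = code t" by blast
    obtain t1 a t2 where d: "dec t = (t1,a,t2)" by (cases "dec t") auto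
    have D: "t = t1 @ a # t2" "phi s \<notin> reach (a#t2@s)" using dec[OF t(1)] d by auto
    have L: "t \<in> lists Alph" "length t = n" using t unfolding T2_def Tn_iff by auto
    have Xm: "out (a#t2@s) t1 \<in> X (length t1) a (phi (t2@s))"
      unfolding X_def using L D by (auto simp: Tn_iff)
    have k: "length t1 \<in> {..<n}" "a \<in> Alph" using L D by auto
    have q: "phi (t2@s) \<in> SS" by (rule phi_SS) (use L D s in simp)
    have cd: "c = (\<lambda>ob. (length t1, a, phi (t2@s), ob)) (out (a#t2@s) t1)"
      unfolding t(2) code_def d by simp
    have cX: "c \<in> (\<lambda>ob. (length t1, a, phi (t2@s), ob)) ` X (length t1) a (phi (t2@s))"
      using cd Xm by (intro image_eqI[where f="\<lambda>ob. (length t1, a, phi (t2@s), ob)" and x="out (a#t2@s) t1"]) simp_all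
    show "c \<in> Big" unfolding Big_def by (rule UN_I[OF k(1)], rule UN_I[OF k(2)], rule UN_I[OF q], rule cX)
  qed
  have Xfin: "finite (X k a q)" for k a q
  proof (rule finite_subset)
    show "X k a q \<subseteq> {xs. set xs \<subseteq> lists Alph // R \<and> length xs = k}"
    proof
      fix ob assume "ob \<in> X k a q"
      then obtain t2 t1 where o: "a \<in> Alph" "t2 \<in> lists Alph" "t1 \<in> Tn k" "ob = out (a#t2@s) t1"
        unfolding X_def by blast
      have "set ob \<subseteq> lists Alph // R" unfolding o(4) by (rule out_set) (use o s in \<open>simp_all add: Tn_iff\<close>)
      moreover have "length ob = k" using o by (simp add: Tn_iff)
      ultimately show "ob \<in> {xs. set xs \<subseteq> lists Alph // R \<and> length xs = k}" by simp
    qed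
    show "finite {xs. set xs \<subseteq> lists Alph // R \<and> length xs = k}" using fiq by (rule finite_lists_length_eq)
  qed
  have Xc: "card (X k a q) \<le> P" if k: "k < n" and a: "a \<in> Alph" for k a q
  proof (cases "X k a q = {}")
    case True thus ?thesis by simp
  next
    case False
    then obtain t20 where t20: "t20 \<in> lists Alph" "phi (t20@s) = q" "phi s \<notin> reach (a#t20@s)"
      unfolding X_def by blast
    have "X k a q \<subseteq> out (a#t20@s) ` Tn k"
    proof
      fix ob assume "ob \<in> X k a q"
      then obtain t2 t1 where ob: "t2 \<in> lists Alph" "phi (t2@s) = q" "t1 \<in> Tn k" "ob = out (a#t2@s) t1"
        unfolding X_def by blast
      have "phi ([a]@t2@s) = phi ([a]@t20@s)" using phi_app[of "t2@s" "t20@s" "[a]"] ob t20 s a by simp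
      hence "out (a#t2@s) t1 = out (a#t20@s) t1" using out_phi[of "a#t2@s" "a#t20@s" t1] ob t20 s a
        by (simp add: Tn_iff)
      thus "ob \<in> out (a#t20@s) ` Tn k" using ob by simp
    qed
    hence "card (X k a q) \<le> card (out (a#t20@s) ` Tn k)" using Tn_fin by (intro card_mono) auto
    also have "\<dots> \<le> B^(card (reach (a#t20@s))) * (k+1)^(card (reach (a#t20@s)))"
    proof -
      have l: "a#t20@s \<in> lists Alph" using a t20 s by simp
      have "reach (a#t20@s) \<subseteq> reach s" using reach_mono[of "a#t20" s] a t20 by simp
      moreover have "phi s \<in> reach s" by (rule reach_self)
      ultimately have "reach (a#t20@s) < reach s" using t20(3) by blast
      hence "card (reach (a#t20@s)) < card (reach s)" using reach_fin[OF s] by (rule psubset_card_mono[rotated])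
      thus ?thesis using less.hyps[OF _ l] unfolding B_def by blast
    qed
    also have "\<dots> \<le> P"
    proof -
      define r' where "r' = card (reach (a#t20@s))"
      have "reach (a#t20@s) \<subseteq> reach s" using reach_mono[of "a#t20" s] a t20 by simp
      moreover have "phi s \<in> reach s" by (rule reach_self)
      ultimately have "reach (a#t20@s) < reach s" using t20(3) by blast
      hence "r' < r" unfolding r'_def r_def using reach_fin[OF s] by (rule psubset_card_mono[rotated])
      hence rr: "r' \<le> r - 1" by simp
      have "B^r' \<le> B^(r-1)" using B1 rr by (rule power_increasing[rotated])
      moreover have "(k+1)^r' \<le> (n+1)^(r-1)"
      proof -
        have "(k+1)^r' \<le> (n+1)^r'" using k by (intro power_mono) auto
        also have "\<dots> \<le> (n+1)^(r-1)" using rr by (intro power_increasing) auto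
        finally show ?thesis .
      qed
      ultimately show ?thesis unfolding P_def r'_def[symmetric] by (intro mult_le_mono)
    qed
    finally show ?thesis .
  qed
  have fBig: "finite Big" unfolding Big_def using Xfin finA SS_fin by auto
  have cB: "card Big \<le> n * (card Alph * (card SS * P))"
  proof -
    have c3: "card (\<Union>q\<in>SS. (\<lambda>ob. (k,a,q,ob)) ` X k a q) \<le> card SS * P" if "k < n" "a \<in> Alph" for k a
    proof -
      have "card (\<Union>q\<in>SS. (\<lambda>ob. (k,a,q,ob)) ` X k a q) \<le> (\<Sum>q\<in>SS. card ((\<lambda>ob. (k,a,q,ob)) ` X k a q))"
        using SS_fin by (rule card_UN_le)
      also have "\<dots> \<le> card SS * P"
      proof (rule sum_bounded_above[of SS _ P, simplified])
        fix q show "card ((\<lambda>ob. (k,a,q,ob)) ` X k a q) \<le> P"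
          by (rule le_trans[OF card_image_le[OF Xfin] Xc[OF that]])
      qed
      finally show ?thesis .
    qed
    have c4: "card (\<Union>a\<in>Alph. \<Union>q\<in>SS. (\<lambda>ob. (k,a,q,ob)) ` X k a q) \<le> card Alph * (card SS * P)" if "k < n" for k
    proof -
      have "card (\<Union>a\<in>Alph. \<Union>q\<in>SS. (\<lambda>ob. (k,a,q,ob)) ` X k a q) \<le> (\<Sum>a\<in>Alph. card (\<Union>q\<in>SS. (\<lambda>ob. (k,a,q,ob)) ` X k a q))"
        using finA by (rule card_UN_le)
      also have "\<dots> \<le> card Alph * (card SS * P)"
        by (rule sum_bounded_above[of Alph _ "card SS * P", simplified]) (use c3 that in auto)
      finally show ?thesis .
    qed
    have "card Big \<le> (\<Sum>k\<in>{..<n}. card (\<Union>a\<in>Alph. \<Union>q\<in>SS. (\<lambda>ob. (k,a,q,ob)) ` X k a q))"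
      unfolding Big_def by (rule card_UN_le) simp
    also have "\<dots> \<le> n * (card Alph * (card SS * P))"
      by (rule sum_bounded_above[of "{..<n}" _ "card Alph * (card SS * P)", simplified]) (use c4 in auto)
    finally show ?thesis .
  qed
  have "card (out s ` Tn n) \<le> card (out s ` T1) + card (out s ` T2)"
    unfolding split by (rule card_Un_le)
  also have "\<dots> \<le> card SS + n * (card Alph * (card SS * P))"
    using c1 c2a card_mono[OF fBig sub] cB by linarith
  also have "\<dots> \<le> (card SS * (card Alph + 1)) * (n+1) * P" using P1 by (rule arith1)
  also have "\<dots> = B^r * (n+1)^r"
  proof -
    have "r = Suc (r-1)" using r1 by simp
    hence "B^r * (n+1)^r = B * (n+1) * P" unfolding P_def by (metis mult.assoc mult.left_commute power_Suc)
    thus ?thesis unfolding B_def by simp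
  qed
  finally show ?case unfolding B_def r_def .
qed

lemma SE_lists: "(w,w') \<in> suffix_expansion Alph R \<Longrightarrow> w \<in> lists Alph \<and> w' \<in> lists Alph"
  unfolding suffix_expansion_def by simp

lemma drop_lists: "w \<in> lists Alph \<Longrightarrow> drop i w \<in> lists Alph"
  by (metis append_take_drop_id append_in_lists_conv)

lemma SE_refl: "w \<in> lists Alph \<Longrightarrow> (w,w) \<in> suffix_expansion Alph R"
  unfolding suffix_expansion_def using Rrefl drop_lists by auto

lemma SE_sym: "(w,w') \<in> suffix_expansion Alph R \<Longrightarrow> (w',w) \<in> suffix_expansion Alph R"
  unfolding suffix_expansion_def using Rsym by auto

lemma SE_out:
  assumes w: "w \<in> lists Alph" and w': "w' \<in> lists Alph"
  shows "(w,w') \<in> suffix_expansion Alph R \<longleftrightarrow> out [] w = out [] w'"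
proof
  assume "(w,w') \<in> suffix_expansion Alph R"
  hence L: "length w = length w'" and D: "\<forall>i<length w. (drop i w, drop i w') \<in> R"
    unfolding suffix_expansion_def by auto
  show "out [] w = out [] w'"
  proof (rule nth_equalityI)
    show "length (out [] w) = length (out [] w')" using L by simp
    fix i assume "i < length (out [] w)"
    hence i: "i < length w" by simp
    have "R``{drop i w} = R``{drop i w'}" using D i eqv by (simp add: equiv_class_eq)
    thus "out [] w ! i = out [] w' ! i" using out_nth[of i w "[]"] out_nth[of i w' "[]"] i L by simp
  qed
next
  assume e: "out [] w = out [] w'"
  hence L: "length w = length w'" using out_len by metis
  have "(drop i w, drop i w') \<in> R" if i: "i < length w" for i
  proof -
    have "R``{drop i w} = R``{drop i w'}" using out_nth[of i w "[]"] out_nth[of i w' "[]"] i L e by simp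
    thus ?thesis using eq_equiv_class_iff[OF eqv drop_lists[OF w] drop_lists[OF w']] by simp
  qed
  thus "(w,w') \<in> suffix_expansion Alph R" unfolding suffix_expansion_def using w w' L by auto
qed

lemma SE_class: "w \<in> lists Alph \<Longrightarrow> suffix_expansion Alph R `` {w} = {w' \<in> lists Alph. out [] w = out [] w'}"
  using SE_out SE_lists by blast

lemma words_upto_UN: "words_upto Alph n = (\<Union>k\<in>{..n}. Tn k)"
  unfolding words_upto_def Tn_def by auto

lemma words_upto_fin: "finite (words_upto Alph n)"
  unfolding words_upto_UN using Tn_fin by auto

lemma quot_img: "A // r = (\<lambda>w. r``{w}) ` A"
  unfolding quotient_def by auto

lemma poly_dir:
  assumes nc: "\<not> has_critical_tuple Alph R"
  shows "poly_bounded (\<lambda>n. card (words_upto Alph n // suffix_expansion Alph R))"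
proof -
  define B where "B = card SS * (card Alph + 1)"
  define r where "r = card (reach [])"
  have B1: "B \<ge> 1" unfolding B_def using SS_ne by simp
  have rS: "r \<le> card SS" unfolding r_def using reach_SS[of "[]"] SS_fin by (simp add: card_mono)
  have "card (words_upto Alph n // suffix_expansion Alph R) \<le> B^(card SS) * (n+1)^(card SS + 1)" for n
  proof -
    have "card (words_upto Alph n // suffix_expansion Alph R)
        = card ((\<lambda>w. suffix_expansion Alph R``{w}) ` words_upto Alph n)" by (simp add: quot_img)
    also have "\<dots> \<le> card (out [] ` words_upto Alph n)"
    proof (rule card_image_factor[OF words_upto_fin])
      fix x y assume "x \<in> words_upto Alph n" "y \<in> words_upto Alph n" "out [] x = out [] y"
      thus "suffix_expansion Alph R``{x} = suffix_expansion Alph R``{y}"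
        using SE_class unfolding words_upto_def by auto
    qed
    also have "\<dots> = card (\<Union>k\<in>{..n}. out [] ` Tn k)" unfolding words_upto_UN image_UN ..
    also have "\<dots> \<le> (\<Sum>k\<in>{..n}. card (out [] ` Tn k))" by (rule card_UN_le) simp
    also have "\<dots> \<le> (n+1) * (B^r * (n+1)^r)"
    proof -
      have bnd: "card (out [] ` Tn k) \<le> B^r * (n+1)^r" if k: "k \<in> {..n}" for k
      proof -
        have "card (out [] ` Tn k) \<le> B^r * (k+1)^r" using bound[OF nc, of "[]" k] unfolding B_def r_def by simp
        also have "\<dots> \<le> B^r * (n+1)^r" using k by (intro mult_le_mono power_mono) auto
        finally show ?thesis .
      qed
      show ?thesis using sum_bounded_above[of "{..n}" "\<lambda>k. card (out [] ` Tn k)" "B^r * (n+1)^r", OF bnd] by simp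
    qed
    also have "\<dots> \<le> (n+1) * (B^(card SS) * (n+1)^(card SS))"
      using B1 rS by (intro mult_le_mono power_increasing) auto
    also have "\<dots> = B^(card SS) * (n+1)^(card SS + 1)" by (simp add: algebra_simps)
    finally show ?thesis .
  qed
  thus ?thesis unfolding poly_bounded_def by blast
qed

lemma SE_split:
  assumes "(A@u2@z, A'@v2@z) \<in> suffix_expansion Alph R" "length A = length A'" "u2 \<noteq> []"
  shows "(u2@z, v2@z) \<in> R"
proof -
  have "length A < length (A@u2@z)" using assms(3) by simp
  hence "(drop (length A) (A@u2@z), drop (length A) (A'@v2@z)) \<in> R"
    using assms(1) unfolding suffix_expansion_def by blast
  thus ?thesis using assms(2) by simp
qed

lemma crit_dir:
  assumes hc: "has_critical_tuple Alph R"
  shows "\<not> poly_bounded (\<lambda>n. card (words_upto Alph n // suffix_expansion Alph R))"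
proof
  assume pb: "poly_bounded (\<lambda>n. card (words_upto Alph n // suffix_expansion Alph R))"
  then obtain c d where cd: "\<And>n. card (words_upto Alph n // suffix_expansion Alph R) \<le> c * (n+1)^d"
    unfolding poly_bounded_def by blast
  obtain u2 v2 u v where ct: "critical_tuple Alph R u2 v2 u v"
    using hc unfolding has_critical_tuple_def by blast
  obtain u1 v1 where uv: "u = u1 @ u2" "v = v1 @ v2" using ct unfolding critical_tuple_def by blast
  have L: "u \<in> lists Alph" "v \<in> lists Alph" "length u2 = length v2" "length u2 \<ge> 1"
    and nR: "\<And>w. w \<in> word_star {u,v} \<Longrightarrow> (u2 @ w, v2 @ w) \<notin> R"
    using ct unfolding critical_tuple_def by auto
  define lu where "lu = length u"
  define lv where "lv = length v"
  have lu1: "lu \<ge> 1" "lv \<ge> 1" using L uv unfolding lu_def lv_def by auto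
  define blk where "blk b = (if b then replicate lv u else replicate lu v)" for b
  define enc where "enc bs = concat (concat (map blk bs))" for bs
  have blk_len: "length (concat (blk b)) = lu*lv" for b
    unfolding blk_def lu_def lv_def by (simp add: length_concat sum_list_replicate)
  have enc_len: "length (enc bs) = length bs * (lu*lv)" for bs
    by (induction bs) (simp_all add: enc_def blk_len)
  have blk_set: "set (blk b) \<subseteq> {u,v}" for b unfolding blk_def by auto
  have enc_lists: "enc bs \<in> lists Alph" for bs
  proof -
    have "concat (map blk bs) \<in> lists {u,v}" using blk_set[THEN subsetD] by fastforce
    moreover have "\<And>xs. xs \<in> lists {u,v} \<Longrightarrow> concat xs \<in> lists Alph" using L(1,2) by fastforce
    ultimately show ?thesis unfolding enc_def by blast
  qed
  have enc_star: "enc bs \<in> word_star {u,v}" for bs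
  proof -
    have "concat (map blk bs) \<in> lists {u,v}" using blk_set[THEN subsetD] by fastforce
    thus ?thesis unfolding enc_def word_star_def by blast
  qed
  have enc_app: "enc (p @ b # q) = enc p @ concat (blk b) @ enc q" for p b q
    unfolding enc_def by simp
  have repl: "concat (replicate n w) = concat (replicate (n-1) w) @ w" if "n \<ge> 1" for n and w :: "'a list"
  proof -
    have "replicate n w = replicate (n-1) w @ [w]" using that
      by (metis Suc_diff_le diff_Suc_1 replicate_Suc replicate_append_same)
    thus ?thesis by simp
  qed
  have key: "(enc (p @ True # q), enc (p' @ False # q)) \<notin> suffix_expansion Alph R"
    if lp: "length p = length p'" for p p' q
  proof
    assume se: "(enc (p @ True # q), enc (p' @ False # q)) \<in> suffix_expansion Alph R"
    define A where "A = enc p @ concat (replicate (lv-1) u) @ u1"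
    define A' where "A' = enc p' @ concat (replicate (lu-1) v) @ v1"
    have e1: "enc (p @ True # q) = A @ u2 @ enc q"
      unfolding enc_app A_def blk_def using repl[OF lu1(2), of u] uv by simp
    have e2: "enc (p' @ False # q) = A' @ v2 @ enc q"
      unfolding enc_app A'_def blk_def using repl[OF lu1(1), of v] uv by simp
    have "length A + length u2 = length (enc p @ concat (blk True))"
      unfolding A_def blk_def using repl[OF lu1(2), of u] uv by simp
    moreover have "length A' + length v2 = length (enc p' @ concat (blk False))"
      unfolding A'_def blk_def using repl[OF lu1(1), of v] uv by simp
    ultimately have lA: "length A = length A'" using lp L(3) by (simp add: enc_len blk_len)
    have "(u2 @ enc q, v2 @ enc q) \<in> R"
    proof -
      have "u2 \<noteq> []" using L(4) by auto
      thus ?thesis using SE_split[OF se[unfolded e1 e2] lA] by blast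
    qed
    thus False using nR[OF enc_star] by blast
  qed
  have sep: "(enc bs, enc bs') \<notin> suffix_expansion Alph R"
    if lbs: "length bs = length bs'" "bs \<noteq> bs'" for bs bs'
  proof -
    obtain p p' x y q where d: "bs = p@x#q" "bs' = p'@y#q" "x \<noteq> y" "length p = length p'"
      using list_last_diff[OF lbs] by blast
    show ?thesis
    proof (cases x)
      case True
      hence "y = False" using d by simp
      thus ?thesis using key[OF d(4), of q] True d by simp
    next
      case False
      hence "y = True" using d by simp
      hence "(enc bs', enc bs) \<notin> suffix_expansion Alph R" using key[OF d(4)[symmetric], of q] False d by simp
      thus ?thesis using SE_sym by metis
    qed
  qed
  define m where "m = lu*lv"
  have m1: "m \<ge> 1" unfolding m_def using lu1 by simp
  have lower: "2^k \<le> c * (k*m+1)^d" for k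
  proof -
    define BS where "BS = {bs :: bool list. set bs \<subseteq> UNIV \<and> length bs = k}"
    have "card BS = card (UNIV::bool set)^k" unfolding BS_def by (rule card_lists_length_eq) simp
    hence cBS: "card BS = 2^k" by simp
    have inj: "inj_on (\<lambda>bs. suffix_expansion Alph R``{enc bs}) BS"
    proof (rule inj_onI)
      fix bs bs' assume b: "bs \<in> BS" "bs' \<in> BS"
        and e: "suffix_expansion Alph R``{enc bs} = suffix_expansion Alph R``{enc bs'}"
      have "enc bs' \<in> suffix_expansion Alph R``{enc bs'}" using SE_refl[OF enc_lists] by simp
      hence "enc bs' \<in> suffix_expansion Alph R``{enc bs}" using e by simp
      hence "(enc bs, enc bs') \<in> suffix_expansion Alph R" by simp
      moreover have "length bs = length bs'" using b unfolding BS_def by simp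
      ultimately show "bs = bs'" using sep by blast
    qed
    have sub: "(\<lambda>bs. suffix_expansion Alph R``{enc bs}) ` BS \<subseteq> words_upto Alph (k*m) // suffix_expansion Alph R"
    proof
      fix X assume "X \<in> (\<lambda>bs. suffix_expansion Alph R``{enc bs}) ` BS"
      then obtain bs where bs: "bs \<in> BS" "X = suffix_expansion Alph R``{enc bs}" by blast
      have "enc bs \<in> words_upto Alph (k*m)"
        unfolding words_upto_def using enc_lists bs(1) enc_len unfolding BS_def m_def by simp
      thus "X \<in> words_upto Alph (k*m) // suffix_expansion Alph R" using bs(2) by (simp add: quotientI)
    qed
    have fin: "finite (words_upto Alph (k*m) // suffix_expansion Alph R)"
      unfolding quot_img using words_upto_fin by simp
    have "2^k \<le> card (words_upto Alph (k*m) // suffix_expansion Alph R)"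
      using card_inj_on_le[OF inj sub fin] cBS by simp
    also have "\<dots> \<le> c * (k*m+1)^d" by (rule cd)
    finally show ?thesis .
  qed
  obtain k where k: "(c * m^d) * (k+1)^d < (2::nat)^k" using growth by blast
  have "(k*m+1)^d \<le> (m*(k+1))^d" using m1 by (intro power_mono) (auto simp: algebra_simps)
  also have "\<dots> = m^d * (k+1)^d" by (rule power_mult_distrib)
  finally have "c * (k*m+1)^d \<le> c * (m^d * (k+1)^d)" by (rule mult_le_mono2)
  hence "c * (k*m+1)^d \<le> c * m^d * (k+1)^d" by (simp add: mult.assoc)
  thus False using lower[of k] k by linarith
qed

end
theorem theorem18:
  fixes Alph :: "'a set" and R :: "('a list \<times> 'a list) set"
  assumes "finite Alph"
    and "right_congruence Alph R"
    and "finite_index Alph R"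
  shows "poly_bounded (\<lambda>n. card (words_upto Alph n // suffix_expansion Alph R))
         \<longleftrightarrow> \<not> has_critical_tuple Alph R"
proof -
  interpret rcx Alph R using assms by unfold_locales
  show ?thesis using poly_dir crit_dir by blast
qed

end
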